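(* Let $B$ be a unital $C^*$-algebra with a $*$-isomorphism $\psi:B\to M_n\otimes B$ satisfying $\psi(1)=I_n\otimes1$, let $A$ be a maximal abelian $*$-subalgebra of $B$, and let $\phi:A\to\mathbb{C}$ be a unital algebra homomorphism extended to a positive contraction $\phi:B\to\mathbb{C}$. If $\sigma_2(A)\subset A$, then $(\mathrm{id}\otimes e_{ij}\otimes\mathrm{id}^{\otimes(m-1)})(\phi_{m+1}(A))\subset\phi_m(A)$ for all $m\ge1$ and $1\le i,j\le n$.
   Context: $M_n=M_n(\mathbb{C})$, matrix units $E_{kl}$, identity $I_n$. Define $\psi_0=\mathrm{id}_B$, $\psi_{m+1}=(\mathrm{id}^{\otimes m}\otimes\psi)\circ\psi_m:B\to M_n^{\otimes(m+1)}\otimes B$. With $f(b)=I_n\otimes b$, $\sigma_2=\psi_2^{-1}\circ(\mathrm{id}\otimes f)\circ\psi_1:B\to B$. For $m\ge1$, $\phi_m=(\mathrm{id}^{\otimes m}\otimes\phi)\circ\psi_m:B\to M_n^{\otimes m}$. $e_{ij}:M_n\to\mathbb{C}$ is the linear functional $e_{ij}(E_{kl})=\delta_{ik}\delta_{jl}$, and $\mathrm{id}\otimes e_{ij}\otimes\mathrm{id}^{\otimes(m-1)}:M_n^{\otimes(m+1)}\to M_n^{\otimes m}$ applies $e_{ij}$ to the second tensor factor. *)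

theory Defs
  imports Complex_Main
begin

definition cstar_algebra ::
  "(complex \<Rightarrow> 'b::ring_1 \<Rightarrow> 'b) \<Rightarrow> ('b \<Rightarrow> 'b) \<Rightarrow> ('b \<Rightarrow> real) \<Rightarrow> bool" where
  "cstar_algebra sc st nr \<longleftrightarrow>
     (\<forall>a. sc 1 a = a) \<and> (\<forall>c d a. sc c (sc d a) = sc (c * d) a) \<and>
     (\<forall>c a b. sc c (a + b) = sc c a + sc c b) \<and> (\<forall>c d a. sc (c + d) a = sc c a + sc d a) \<and>
     (\<forall>c a b. sc c (a * b) = sc c a * b \<and> sc c (a * b) = a * sc c b) \<and>
     (\<forall>a. st (st a) = a) \<and> (\<forall>a b. st (a + b) = st a + st b) \<and>
     (\<forall>c a. st (sc c a) = sc (cnj c) (st a)) \<and> (\<forall>a b. st (a * b) = st b * st a) \<and>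
     (\<forall>a. 0 \<le> nr a) \<and> (\<forall>a. nr a = 0 \<longleftrightarrow> a = 0) \<and> (\<forall>a b. nr (a + b) \<le> nr a + nr b) \<and>
     (\<forall>c a. nr (sc c a) = cmod c * nr a) \<and> (\<forall>a b. nr (a * b) \<le> nr a * nr b) \<and>
     (\<forall>a. nr (st a * a) = (nr a)\<^sup>2) \<and>
     (\<forall>X :: nat \<Rightarrow> 'b. (\<forall>e>0. \<exists>N. \<forall>p\<ge>N. \<forall>q\<ge>N. nr (X p - X q) < e) \<longrightarrow>
          (\<exists>L. \<forall>e>0. \<exists>N. \<forall>p\<ge>N. nr (X p - L) < e))"

text \<open>M_n \<otimes> B is identified with n x n matrices over B, represented as
  functions nat \<Rightarrow> nat \<Rightarrow> 'b vanishing outside {0..<n} x {0..<n}.\<close>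

definition matB :: "nat \<Rightarrow> (nat \<Rightarrow> nat \<Rightarrow> 'b::zero) set" where
  "matB n = {X. \<forall>k l. \<not> (k < n \<and> l < n) \<longrightarrow> X k l = 0}"

definition mat_mult :: "nat \<Rightarrow> (nat \<Rightarrow> nat \<Rightarrow> 'b::semiring_0) \<Rightarrow> (nat \<Rightarrow> nat \<Rightarrow> 'b) \<Rightarrow> nat \<Rightarrow> nat \<Rightarrow> 'b" where
  "mat_mult n X Y = (\<lambda>k l. \<Sum>r<n. X k r * Y r l)"

definition star_iso :: "nat \<Rightarrow> (complex \<Rightarrow> 'b::ring_1 \<Rightarrow> 'b) \<Rightarrow> ('b \<Rightarrow> 'b) \<Rightarrow> ('b \<Rightarrow> nat \<Rightarrow> nat \<Rightarrow> 'b) \<Rightarrow> bool" where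
  "star_iso n sc st psi \<longleftrightarrow>
     bij_betw psi UNIV (matB n) \<and>
     (\<forall>a b. psi (a + b) = (\<lambda>k l. psi a k l + psi b k l)) \<and>
     (\<forall>c a. psi (sc c a) = (\<lambda>k l. sc c (psi a k l))) \<and>
     (\<forall>a b. psi (a * b) = mat_mult n (psi a) (psi b)) \<and>
     (\<forall>a. psi (st a) = (\<lambda>k l. st (psi a l k)))"

definition idmat :: "nat \<Rightarrow> nat \<Rightarrow> nat \<Rightarrow> 'b::{zero,one}" where
  "idmat n = (\<lambda>k l. if k = l \<and> k < n then 1 else 0)"

text \<open>M_n^{\<otimes>m} \<otimes> B is represented by functions on pairs of index lists
  (list position p = p-th tensor factor M_n); entries are nonzero only at lists of
  length m with entries < n.  psi_m defined by psi_0 = id, psi_{m+1} = (id^m \<otimes> psi) \<circ> psi_m.\<close>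
fun psi_pow :: "('b::zero \<Rightarrow> nat \<Rightarrow> nat \<Rightarrow> 'b) \<Rightarrow> nat \<Rightarrow> 'b \<Rightarrow> nat list \<Rightarrow> nat list \<Rightarrow> 'b" where
  "psi_pow psi 0 b = (\<lambda>ks ls. if ks = [] \<and> ls = [] then b else 0)"
| "psi_pow psi (Suc m) b = (\<lambda>ks ls.
     if length ks = Suc m \<and> length ls = Suc m
     then psi (psi_pow psi m b (butlast ks) (butlast ls)) (last ks) (last ls) else 0)"

text \<open>sigma_2 = psi_2^{-1} \<circ> (id \<otimes> f) \<circ> psi_1 with f(b) = I_n \<otimes> b.\<close>
definition sigma2 :: "nat \<Rightarrow> ('b::zero \<Rightarrow> nat \<Rightarrow> nat \<Rightarrow> 'b) \<Rightarrow> 'b \<Rightarrow> 'b" where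
  "sigma2 n psi b = (THE b'. psi_pow psi 2 b' =
     (\<lambda>ks ls. if length ks = 2 \<and> length ls = 2 \<and> ks ! 1 = ls ! 1 \<and> ks ! 1 < n
              then psi b (ks ! 0) (ls ! 0) else 0))"

definition phi_pow :: "('b::zero \<Rightarrow> nat \<Rightarrow> nat \<Rightarrow> 'b) \<Rightarrow> ('b \<Rightarrow> complex) \<Rightarrow> nat \<Rightarrow> 'b \<Rightarrow> nat list \<Rightarrow> nat list \<Rightarrow> complex" where
  "phi_pow psi phi m b = (\<lambda>ks ls. phi (psi_pow psi m b ks ls))"

text \<open>id \<otimes> e_ij \<otimes> id^{m-1}: apply e_ij to the second tensor factor (indices 0-based).\<close>
definition slot_e :: "nat \<Rightarrow> nat \<Rightarrow> (nat list \<Rightarrow> nat list \<Rightarrow> complex) \<Rightarrow> nat list \<Rightarrow> nat list \<Rightarrow> complex" where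
  "slot_e i j X = (\<lambda>ks ls. if ks \<noteq> [] \<and> ls \<noteq> [] then X (hd ks # i # tl ks) (hd ls # j # tl ls) else 0)"

definition star_subalgebra :: "(complex \<Rightarrow> 'b::ring_1 \<Rightarrow> 'b) \<Rightarrow> ('b \<Rightarrow> 'b) \<Rightarrow> 'b set \<Rightarrow> bool" where
  "star_subalgebra sc st A \<longleftrightarrow> 0 \<in> A \<and>
     (\<forall>a\<in>A. \<forall>b\<in>A. a + b \<in> A \<and> a * b \<in> A) \<and> (\<forall>c. \<forall>a\<in>A. sc c a \<in> A) \<and> (\<forall>a\<in>A. st a \<in> A)"

definition abelian_star_subalgebra :: "(complex \<Rightarrow> 'b::ring_1 \<Rightarrow> 'b) \<Rightarrow> ('b \<Rightarrow> 'b) \<Rightarrow> 'b set \<Rightarrow> bool" where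
  "abelian_star_subalgebra sc st A \<longleftrightarrow> star_subalgebra sc st A \<and> (\<forall>a\<in>A. \<forall>b\<in>A. a * b = b * a)"

definition max_abelian_star_subalgebra :: "(complex \<Rightarrow> 'b::ring_1 \<Rightarrow> 'b) \<Rightarrow> ('b \<Rightarrow> 'b) \<Rightarrow> 'b set \<Rightarrow> bool" where
  "max_abelian_star_subalgebra sc st A \<longleftrightarrow> abelian_star_subalgebra sc st A \<and>
     (\<forall>A'. abelian_star_subalgebra sc st A' \<and> A \<subseteq> A' \<longrightarrow> A' = A)"

definition positive_contraction :: "(complex \<Rightarrow> 'b::ring_1 \<Rightarrow> 'b) \<Rightarrow> ('b \<Rightarrow> 'b) \<Rightarrow> ('b \<Rightarrow> real) \<Rightarrow> ('b \<Rightarrow> complex) \<Rightarrow> bool" where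
  "positive_contraction sc st nr phi \<longleftrightarrow>
     (\<forall>a b. phi (a + b) = phi a + phi b) \<and> (\<forall>c a. phi (sc c a) = c * phi a) \<and>
     (\<forall>a. Im (phi (st a * a)) = 0 \<and> 0 \<le> Re (phi (st a * a))) \<and>
     (\<forall>a. cmod (phi a) \<le> nr a)"

end

theory Submission
  imports Defs
begin

inductive_set gen_set :: "(complex \<Rightarrow> 'b::ring_1 \<Rightarrow> 'b) \<Rightarrow> ('b \<Rightarrow> 'b) \<Rightarrow> 'b set \<Rightarrow> 'b \<Rightarrow> 'b set"
  for sc st A h where
  g_A: "x \<in> A \<Longrightarrow> x \<in> gen_set sc st A h"
| g_h: "h \<in> gen_set sc st A h"
| g_0: "0 \<in> gen_set sc st A h"
| g_add: "x \<in> gen_set sc st A h \<Longrightarrow> y \<in> gen_set sc st A h \<Longrightarrow> x + y \<in> gen_set sc st A h"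
| g_mul: "x \<in> gen_set sc st A h \<Longrightarrow> y \<in> gen_set sc st A h \<Longrightarrow> x * y \<in> gen_set sc st A h"
| g_sc: "x \<in> gen_set sc st A h \<Longrightarrow> sc c x \<in> gen_set sc st A h"
| g_st: "x \<in> gen_set sc st A h \<Longrightarrow> st x \<in> gen_set sc st A h"

lemma max_commutant:
  fixes sc :: "complex \<Rightarrow> 'b::ring_1 \<Rightarrow> 'b"
  assumes cs: "cstar_algebra sc st nr"
    and mx: "max_abelian_star_subalgebra sc st A"
    and hs: "st h = h" and hc: "\<forall>b\<in>A. h * b = b * h"
  shows "h \<in> A"
proof -
  have sca: "\<And>c a b. sc c (a * b) = sc c a * b" "\<And>c a b. sc c (a * b) = a * sc c b"
    using cs unfolding cstar_algebra_def by metis+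
  have stst: "\<And>a. st (st a) = a" and stm: "\<And>a b. st (a * b) = st b * st a"
    using cs unfolding cstar_algebra_def by auto
  have ab: "abelian_star_subalgebra sc st A" and mxx: "\<And>A'. abelian_star_subalgebra sc st A' \<Longrightarrow> A \<subseteq> A' \<Longrightarrow> A' = A"
    using mx unfolding max_abelian_star_subalgebra_def by auto
  have Acomm: "\<And>a b. a \<in> A \<Longrightarrow> b \<in> A \<Longrightarrow> a * b = b * a"
    and Ast: "\<And>a. a \<in> A \<Longrightarrow> st a \<in> A"
    using ab unfolding abelian_star_subalgebra_def star_subalgebra_def by auto
  let ?G = "gen_set sc st A h"
  let ?S = "insert h A"
  have S_st: "y \<in> ?S \<Longrightarrow> st y \<in> ?S" for y using hs Ast by auto
  have c1: "\<forall>y\<in>?S. g * y = y * g" if "g \<in> ?G" for g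
    using that
  proof (induction rule: gen_set.induct)
    case (g_A x) then show ?case using Acomm hc by auto
  next
    case g_h then show ?case using hc by auto
  next
    case g_0 then show ?case by simp
  next
    case (g_add x y) then show ?case by (simp add: distrib_left distrib_right)
  next
    case (g_mul x y) then show ?case by (metis mult.assoc)
  next
    case (g_sc x c) then show ?case by (metis sca)
  next
    case (g_st x)
    show ?case
    proof
      fix y assume y: "y \<in> ?S"
      have "x * st y = st y * x" using g_st.IH S_st[OF y] by auto
      then have "st (x * st y) = st (st y * x)" by simp
      then show "st x * y = y * st x" by (simp add: stm stst)
    qed
  qed
  have c2: "\<forall>g\<in>?G. g * y = y * g" if "y \<in> ?G" for y
    using that
  proof (induction rule: gen_set.induct)
    case (g_A x) then show ?case using c1 by auto
  next
    case g_h then show ?case using c1 by auto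
  next
    case g_0 then show ?case by simp
  next
    case (g_add x y) then show ?case by (simp add: distrib_left distrib_right)
  next
    case (g_mul x y) then show ?case by (metis mult.assoc)
  next
    case (g_sc x c) then show ?case by (metis sca)
  next
    case (g_st x)
    show ?case
    proof
      fix g assume g: "g \<in> ?G"
      have "st g * x = x * st g" using g_st.IH gen_set.g_st[OF g] by auto
      then have "st (st g * x) = st (x * st g)" by simp
      then show "g * st x = st x * g" by (simp add: stm stst)
    qed
  qed
  have "abelian_star_subalgebra sc st ?G"
    unfolding abelian_star_subalgebra_def star_subalgebra_def
    using c2 by (auto intro: gen_set.intros)
  moreover have "A \<subseteq> ?G" by (auto intro: gen_set.intros)
  ultimately have "?G = A" using mxx by blast
  then show ?thesis using gen_set.g_h by blast
qed

locale setting =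
  fixes sc :: "complex \<Rightarrow> 'b::ring_1 \<Rightarrow> 'b" and st nr n psi A
  assumes cs: "cstar_algebra sc st nr" and iso: "star_iso n sc st psi"
    and mx: "max_abelian_star_subalgebra sc st A" and sig: "sigma2 n psi ` A \<subseteq> A"
begin

lemma padd: "psi (a + b) = (\<lambda>k l. psi a k l + psi b k l)"
  and pmul: "psi (a * b) = mat_mult n (psi a) (psi b)"
  and pst: "psi (st a) = (\<lambda>k l. st (psi a l k))"
  and pbij: "bij_betw psi UNIV (matB n)"
  using iso unfolding star_iso_def by auto

lemma pinj: "inj psi" using pbij bij_betw_def by blast
lemma pin: "psi x \<in> matB n" using pbij bij_betwE by blast
lemma pinv: "X \<in> matB n \<Longrightarrow> psi (inv psi X) = X"
  using pbij by (metis bij_betw_imp_surj_on f_inv_into_f)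
lemma pinv2: "inv psi (psi x) = x" using pinj by simp

lemma p0: "psi 0 k l = 0"
proof -
  have "psi 0 = (\<lambda>k l. psi 0 k l + psi 0 k l)" using padd[of 0 0] by simp
  then have "psi 0 k l = psi 0 k l + psi 0 k l" by (metis)
  then show ?thesis by (metis add_cancel_right_right)
qed

lemma pout: "\<not> (k < n \<and> l < n) \<Longrightarrow> psi x k l = 0"
  using pin[of x] unfolding matB_def by auto

lemma psum: "finite S \<Longrightarrow> psi (\<Sum>r\<in>S. f r) k l = (\<Sum>r\<in>S. psi (f r) k l)"
  by (induction S rule: finite_induct) (auto simp: p0 padd)

definition dg :: "'b \<Rightarrow> nat \<Rightarrow> nat \<Rightarrow> 'b" where
  "dg c = (\<lambda>k l. if k = l \<and> k < n then c else 0)"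
definition tau where "tau c = inv psi (dg c)"

lemma dg_in: "dg c \<in> matB n" unfolding dg_def matB_def by auto
lemma ptau: "psi (tau c) = dg c" unfolding tau_def using pinv dg_in by blast
lemma tau0: "tau 0 = 0"
proof -
  have "dg 0 = psi 0" by (rule ext)+ (simp add: dg_def p0)
  then show ?thesis unfolding tau_def by (simp add: pinv2)
qed

lemma psi_pow2: "psi_pow psi 2 x ks ls =
   (if length ks = 2 \<and> length ls = 2 then psi (psi x (ks!0) (ls!0)) (ks!1) (ls!1) else 0)"
proof (cases "length ks = 2 \<and> length ls = 2")
  case True
  then obtain k0 k1 l0 l1 where "ks = [k0,k1]" "ls = [l0,l1]"
    by (metis (no_types, lifting) One_nat_def Suc_length_conv length_0_conv numeral_2_eq_2)
  then show ?thesis by (simp add: numeral_2_eq_2)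
next
  case False then show ?thesis by (auto simp: numeral_2_eq_2)
qed

lemma sigma2_eq: "sigma2 n psi b = inv psi (\<lambda>k l. tau (psi b k l))"
proof -
  let ?R = "(\<lambda>ks ls. if length ks = 2 \<and> length ls = 2 \<and> ks ! 1 = ls ! 1 \<and> ks ! 1 < n
              then psi b (ks ! 0) (ls ! 0) else 0)"
  let ?b = "inv psi (\<lambda>k l. tau (psi b k l))"
  have inm: "(\<lambda>k l. tau (psi b k l)) \<in> matB n"
    unfolding matB_def using pout tau0 by auto
  have pb: "psi ?b = (\<lambda>k l. tau (psi b k l))" using pinv[OF inm] .
  have ex: "psi_pow psi 2 ?b = ?R"
    by (rule ext)+ (simp add: psi_pow2 pb ptau dg_def)
  have un: "y = ?b" if "psi_pow psi 2 y = ?R" for y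
  proof -
    have "psi (psi y k0 l0) = psi (psi ?b k0 l0)" for k0 l0
    proof (rule ext)+
      fix k1 l1
      have "psi_pow psi 2 y [k0,k1] [l0,l1] = psi_pow psi 2 ?b [k0,k1] [l0,l1]"
        using that ex by simp
      then show "psi (psi y k0 l0) k1 l1 = psi (psi ?b k0 l0) k1 l1" by (simp add: psi_pow2)
    qed
    then have "psi y k0 l0 = psi ?b k0 l0" for k0 l0 using pinj by (meson injD)
    then have "psi y = psi ?b" by (intro ext)
    then show ?thesis using pinj by (simp add: inj_eq)
  qed
  show ?thesis unfolding sigma2_def using ex un by (rule the_equality)
qed

lemma psig: "psi (sigma2 n psi b) k l = tau (psi b k l)"
proof -
  have inm: "(\<lambda>k l. tau (psi b k l)) \<in> matB n"
    unfolding matB_def using pout tau0 by auto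
  show ?thesis unfolding sigma2_eq using pinv[OF inm] by simp
qed

definition F :: "nat \<Rightarrow> nat \<Rightarrow> 'b \<Rightarrow> 'b" where
  "F i j a = inv psi (\<lambda>k l. psi (psi a k l) i j)"

lemma pF: "psi (F i j a) k l = psi (psi a k l) i j"
proof -
  have "(\<lambda>k l. psi (psi a k l) i j) \<in> matB n"
    unfolding matB_def using pout p0 by auto
  then show ?thesis unfolding F_def using pinv by simp
qed

lemma psi_pow_Cons: "psi_pow psi (Suc m) x (k#ks) (l#ls) = psi_pow psi m (psi x k l) ks ls"
proof (induction m arbitrary: ks ls)
  case 0 then show ?case by auto
next
  case (Suc m)
  show ?case
  proof (cases "length ks = Suc m \<and> length ls = Suc m")
    case True
    then have ne: "ks \<noteq> []" "ls \<noteq> []" by auto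
    have "psi_pow psi (Suc (Suc m)) x (k#ks) (l#ls)
       = psi (psi_pow psi (Suc m) x (k # butlast ks) (l # butlast ls)) (last ks) (last ls)"
      using True ne by (subst psi_pow.simps(2)) (simp del: psi_pow.simps)
    also have "\<dots> = psi (psi_pow psi m (psi x k l) (butlast ks) (butlast ls)) (last ks) (last ls)"
      by (simp only: Suc.IH)
    also have "\<dots> = psi_pow psi (Suc m) (psi x k l) ks ls"
      using True by (subst psi_pow.simps(2)) (simp del: psi_pow.simps)
    finally show ?thesis .
  next
    case False then show ?thesis by auto
  qed
qed

lemma sum_dg_r: "j < n \<Longrightarrow> (\<Sum>s<n. f s * dg c s j) = f j * c"
  unfolding dg_def by (simp add: if_distrib[of "(*) _"] cong: if_cong)

lemma sum_dg_l: assumes "i < n" shows "(\<Sum>s<n. dg c i s * f s) = c * f i"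
proof -
  have "(\<Sum>s<n. dg c i s * f s) = (\<Sum>s<n. if i = s then c * f s else 0)"
    by (rule sum.cong) (auto simp: dg_def)
  also have "\<dots> = c * f i" using assms by (simp add: sum.delta)
  finally show ?thesis .
qed

lemma F_comm:
  assumes a: "a \<in> A" and b: "b \<in> A" and ij: "i < n" "j < n"
  shows "F i j a * b = b * F i j a"
proof -
  have ab: "abelian_star_subalgebra sc st A"
    using mx unfolding max_abelian_star_subalgebra_def by auto
  have sb: "sigma2 n psi b \<in> A" using sig b by auto
  have "a * sigma2 n psi b = sigma2 n psi b * a"
    using ab a sb unfolding abelian_star_subalgebra_def by auto
  then have "psi (a * sigma2 n psi b) k l = psi (sigma2 n psi b * a) k l" for k l by simp
  then have e: "(\<Sum>r<n. psi a k r * tau (psi b r l)) = (\<Sum>r<n. tau (psi b k r) * psi a r l)" for k l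
    by (simp add: pmul mat_mult_def psig)
  have "psi (F i j a * b) k l = psi (b * F i j a) k l" for k l
  proof -
    have "psi (\<Sum>r<n. psi a k r * tau (psi b r l)) i j = psi (\<Sum>r<n. tau (psi b k r) * psi a r l) i j"
      using e by simp
    then have "(\<Sum>r<n. psi (psi a k r * tau (psi b r l)) i j) = (\<Sum>r<n. psi (tau (psi b k r) * psi a r l) i j)"
      by (simp add: psum)
    then show ?thesis
      by (simp add: pmul mat_mult_def pF ptau sum_dg_r sum_dg_l ij)
  qed
  then have "psi (F i j a * b) = psi (b * F i j a)" by (intro ext)
  then show ?thesis using pinj by (simp add: inj_eq)
qed

lemma F_st: "st (F i j a) = F j i (st a)"
proof -
  have "psi (st (F i j a)) = psi (F j i (st a))"
    by (intro ext) (simp add: pst pF)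
  then show ?thesis using pinj by (simp add: inj_eq)
qed

lemma F_in: assumes a: "a \<in> A" and ij: "i < n" "j < n" shows "F i j a \<in> A"
proof -
  have ax: "\<forall>a. sc 1 a = a" "\<forall>c d a. sc c (sc d a) = sc (c * d) a"
     "\<forall>c a b. sc c (a + b) = sc c a + sc c b" "\<forall>c d a. sc (c + d) a = sc c a + sc d a"
     "\<forall>c a b. sc c (a * b) = sc c a * b \<and> sc c (a * b) = a * sc c b"
    using cs unfolding cstar_algebra_def by metis+
  have ax': "\<forall>a. st (st a) = a" "\<forall>a b. st (a + b) = st a + st b"
     "\<forall>c a. st (sc c a) = sc (cnj c) (st a)"
    using cs unfolding cstar_algebra_def by auto
  note ax = ax ax'
  have ab: "abelian_star_subalgebra sc st A"
    using mx unfolding max_abelian_star_subalgebra_def by auto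
  then have Acl: "\<And>x y. x \<in> A \<Longrightarrow> y \<in> A \<Longrightarrow> x + y \<in> A" "\<And>c x. x \<in> A \<Longrightarrow> sc c x \<in> A"
    "\<And>x. x \<in> A \<Longrightarrow> st x \<in> A"
    unfolding abelian_star_subalgebra_def star_subalgebra_def by auto
  define x where "x = F i j a"
  have sx: "st x = F j i (st a)" unfolding x_def by (rule F_st)
  have cx: "\<forall>b\<in>A. x * b = b * x" unfolding x_def using F_comm a ij by auto
  have cy: "\<forall>b\<in>A. st x * b = b * st x" unfolding sx using F_comm Acl(3)[OF a] ij by auto
  have sc_c: "\<And>c y. \<forall>b\<in>A. y * b = b * y \<Longrightarrow> \<forall>b\<in>A. sc c y * b = b * sc c y"
    using ax(5) by metis
  have add_c: "\<And>y z. \<forall>b\<in>A. y * b = b * y \<Longrightarrow> \<forall>b\<in>A. z * b = b * z \<Longrightarrow> \<forall>b\<in>A. (y + z) * b = b * (y + z)"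
    by (simp add: distrib_left distrib_right)
  define h1 where "h1 = x + st x"
  define h2 where "h2 = sc \<i> x + sc (- \<i>) (st x)"
  have h1A: "h1 \<in> A"
    apply (rule max_commutant[OF cs mx])
    unfolding h1_def using ax add_c[OF cx cy] by (auto simp: add.commute)
  have h2A: "h2 \<in> A"
    apply (rule max_commutant[OF cs mx])
    unfolding h2_def using ax add_c[OF sc_c[OF cx] sc_c[OF cy]] by (auto simp: add.commute)
  have sc0: "sc 0 y = 0" for y
  proof -
    have "sc (0 + 0) y = sc 0 y + sc 0 y" using ax by blast
    then show ?thesis by simp
  qed
  have "sc (1/2) h1 + sc (- \<i>/2) h2 = x"
  proof -
    have "sc (1/2) h1 + sc (- \<i>/2) h2 = (sc (1/2) x + sc (1/2) x) + (sc (1/2) (st x) + sc (-1/2) (st x))"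
      unfolding h1_def h2_def using ax by (simp add: algebra_simps)
    also have "\<dots> = sc 1 x + sc 0 (st x)"
    proof -
      have h: "(1/2::complex) + 1/2 = 1" "(1/2::complex) + (-1/2) = 0" by simp_all
      show ?thesis using ax(4) h by metis
    qed
    also have "\<dots> = x" using ax(1) sc0 by simp
    finally show ?thesis .
  qed
  moreover have "sc (1/2) h1 + sc (- \<i>/2) h2 \<in> A" using Acl h1A h2A by blast
  ultimately show ?thesis unfolding x_def by simp
qed

end

theorem proposition3p7:
  fixes sc :: "complex \<Rightarrow> 'b::ring_1 \<Rightarrow> 'b" and st :: "'b \<Rightarrow> 'b" and nr :: "'b \<Rightarrow> real"
    and n :: nat and psi :: "'b \<Rightarrow> nat \<Rightarrow> nat \<Rightarrow> 'b" and A :: "'b set" and phi :: "'b \<Rightarrow> complex"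
  assumes "cstar_algebra sc st nr"
    and "n \<ge> 1"
    and "star_iso n sc st psi"
    and "psi 1 = idmat n"
    and "max_abelian_star_subalgebra sc st A"
    and "positive_contraction sc st nr phi"
    and "phi 1 = 1"
    and "\<forall>a\<in>A. \<forall>b\<in>A. phi (a * b) = phi a * phi b"
    and "sigma2 n psi ` A \<subseteq> A"
  shows "\<forall>m\<ge>1. \<forall>i<n. \<forall>j<n. slot_e i j ` (phi_pow psi phi (Suc m) ` A) \<subseteq> phi_pow psi phi m ` A"
proof (intro allI impI subsetI)
  interpret S: setting sc st nr n psi A
    using assms by unfold_locales auto
  have phi0: "phi 0 = 0"
  proof -
    have "phi (0 + 0) = phi 0 + phi 0" using assms(6) unfolding positive_contraction_def by blast
    then show ?thesis by simp
  qed
  fix m i j X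
  assume m: "m \<ge> 1" and ij: "i < n" "j < n" and X: "X \<in> slot_e i j ` (phi_pow psi phi (Suc m) ` A)"
  then obtain a where a: "a \<in> A" and Xa: "X = slot_e i j (phi_pow psi phi (Suc m) a)" by auto
  obtain m' where m': "m = Suc m'" using m by (cases m) auto
  have "X = phi_pow psi phi m (S.F i j a)"
  proof (intro ext)
    fix ks ls
    show "X ks ls = phi_pow psi phi m (S.F i j a) ks ls"
    proof (cases "ks = [] \<or> ls = []")
      case True
      then show ?thesis unfolding Xa slot_e_def phi_pow_def m' using phi0 by auto
    next
      case False
      then obtain k r l r' where "ks = k # r" "ls = l # r'" by (meson list.exhaust)
      then show ?thesis unfolding Xa slot_e_def phi_pow_def m'
        by (simp only: S.psi_pow_Cons S.pF list.sel) simp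
    qed
  qed
  then show "X \<in> phi_pow psi phi m ` A" using S.F_in[OF a ij] by blast
qed

end
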